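(* Let $a<b$, $\varepsilon>0$, $p>1$, $\theta>1$, $F(u)=\frac{1}{2\theta}|1-u^2|^\theta$, and let $D\in C^1(\mathbb{R})$ be strictly positive. Let $u\in C([0,T],H^3(a,b))$ be a solution of $$u_t=\Big[D(u)\big(-\varepsilon^p(|u_x|^{p-2}u_x)_x+F'(u)\big)_x\Big]_x,\qquad x\in(a,b),$$ satisfying the boundary conditions $u_x=0$ and $\big(-\varepsilon^p(|u_x|^{p-2}u_x)_x+F'(u)\big)_x=0$ at $x=a,b$ for all $t$. Then for every $t\in[0,T]$ $$\frac{d}{dt}E_\varepsilon[u](t)=-\varepsilon^{-1}\int_a^b\frac{\tilde u_t^2(x,t)}{D(u(x,t))}\,dx,$$ and consequently there exists $d>0$ such that $$E_\varepsilon[u](0)-E_\varepsilon[u](t)\ge d\,\varepsilon^{-1}\int_0^t\|\tilde u_t(\cdot,s)\|_{L^2(a,b)}^2\,ds\quad\text{for all } t\in[0,T].$$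
   Context: The energy is $E_\varepsilon[u]=\int_a^b\Big[\frac{\varepsilon^{p-1}|u_x|^p}{p}+\frac{F(u)}{\varepsilon}\Big]dx$, and $E_\varepsilon[u](t)$ denotes $E_\varepsilon[u(\cdot,t)]$. For a function $u$ on $[a,b]$, $\tilde u(x,t):=\int_a^x u(y,t)\,dy$ denotes its antiderivative vanishing at $a$. *)

theory Defs
  imports "HOL-Analysis.Analysis"
begin

definition Fpot :: "real \<Rightarrow> real \<Rightarrow> real" where
  "Fpot \<theta> v = (1 / (2 * \<theta>)) * \<bar>1 - v\<^sup>2\<bar> powr \<theta>"

text \<open>The p-Laplacian nonlinearity |v|^(p-2) v, written as sgn v * |v|^(p-1) (well defined at 0).\<close>
definition plap :: "real \<Rightarrow> real \<Rightarrow> real" where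
  "plap p v = sgn v * \<bar>v\<bar> powr (p - 1)"

definition energy :: "real \<Rightarrow> real \<Rightarrow> real \<Rightarrow> real \<Rightarrow> real \<Rightarrow> (real \<Rightarrow> real) \<Rightarrow> real" where
  "energy \<epsilon> p \<theta> a b v =
     integral {a..b} (\<lambda>x. \<epsilon> powr (p - 1) * \<bar>vector_derivative v (at x within {a..b})\<bar> powr p / p
                          + Fpot \<theta> (v x) / \<epsilon>)"

definition antideriv :: "real \<Rightarrow> (real \<Rightarrow> real) \<Rightarrow> real \<Rightarrow> real" where
  "antideriv a f x = integral {a..x} f"

end

theory Submission imports Defs begin

lemma abs_powr_deriv:
  fixes q w :: real assumes q: "q > 1"
  shows "((\<lambda>w. \<bar>w\<bar> powr q) has_real_derivative q * plap q w) (at w)"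
proof (cases "w > 0")
  case True
  have ev: "eventually (\<lambda>y. \<bar>y\<bar> powr q = y powr q) (nhds w)"
    using eventually_nhds_in_open[of "{0<..}" w] True
    by (auto elim!: eventually_mono)
  have "((\<lambda>y. y powr q) has_real_derivative q * w powr (q - 1)) (at w)"
    using has_real_derivative_powr[OF True] .
  then show ?thesis
    using True by (subst DERIV_cong_ev[OF refl ev refl]) (simp add: plap_def)
next
  case False
  show ?thesis
  proof (cases "w < 0")
    case True
    have ev: "eventually (\<lambda>y. \<bar>y\<bar> powr q = (- y) powr q) (nhds w)"
      using eventually_nhds_in_open[of "{..<0}" w] True
      by (auto elim!: eventually_mono)
    have d: "((\<lambda>y. -y) has_real_derivative -1) (at w)"
      by (auto intro!: derivative_eq_intros)
    have "((\<lambda>y. (-y) powr q) has_real_derivative q * (-w) powr (q - of_nat 1) * -1) (at w)"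
      using DERIV_fun_powr[OF d] True by simp
    then show ?thesis
      using True by (subst DERIV_cong_ev[OF refl ev refl]) (simp add: plap_def)
  next
    case False
    with \<open>\<not> w > 0\<close> have w0: "w = 0" by simp
    have lim0: "((\<lambda>h. \<bar>h\<bar> powr (q - 1)) \<longlongrightarrow> 0) (at (0::real))"
    proof -
      have "((\<lambda>h. \<bar>h\<bar> powr (q - 1)) \<longlongrightarrow> \<bar>0\<bar> powr (q - 1)) (at (0::real))"
        using q by (intro tendsto_intros) auto
      then show ?thesis by simp
    qed
    have "((\<lambda>h. (\<bar>0 + h\<bar> powr q - \<bar>0\<bar> powr q) / h) \<longlongrightarrow> 0) (at (0::real))"
    proof (rule Lim_null_comparison[OF _ lim0])
      show "\<forall>\<^sub>F h in at 0. norm ((\<bar>0 + h\<bar> powr q - \<bar>0\<bar> powr q) / h) \<le> \<bar>h\<bar> powr (q - 1)"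
        unfolding eventually_at_filter
      proof (intro always_eventually allI impI)
        fix h :: real assume "h \<noteq> 0"
        then show "norm ((\<bar>0 + h\<bar> powr q - \<bar>0\<bar> powr q) / h) \<le> \<bar>h\<bar> powr (q - 1)"
          by (simp add: powr_diff abs_divide)
      qed
    qed
    then show ?thesis using w0 by (simp add: DERIV_def plap_def)
  qed
qed

lemma plap_cont:
  fixes q w :: real assumes q: "q > 1"
  shows "isCont (plap q) w"
proof (cases "w = 0")
  case False
  show ?thesis unfolding plap_def
    using False q by (intro continuous_intros) auto
next
  case True
  have lim0: "((\<lambda>h. \<bar>h\<bar> powr (q - 1)) \<longlongrightarrow> 0) (at (0::real))"
  proof -
    have "((\<lambda>h. \<bar>h\<bar> powr (q - 1)) \<longlongrightarrow> \<bar>0\<bar> powr (q - 1)) (at (0::real))"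
      using q by (intro tendsto_intros) auto
    then show ?thesis by simp
  qed
  have "(plap q \<longlongrightarrow> 0) (at 0)"
    by (rule Lim_null_comparison[OF _ lim0])
       (auto simp: plap_def abs_mult sgn_if intro!: always_eventually)
  then show ?thesis using True by (simp add: isCont_def plap_def)
qed

lemma Fpot_deriv:
  fixes th v :: real assumes th: "th > 1"
  shows "(Fpot th has_real_derivative - (v * plap th (1 - v\<^sup>2))) (at v)"
proof -
  have d: "((\<lambda>v. 1 - v\<^sup>2) has_real_derivative - (2 * v)) (at v)"
    by (auto intro!: derivative_eq_intros)
  have "((\<lambda>v. \<bar>1 - v\<^sup>2\<bar> powr th) has_real_derivative th * plap th (1 - v\<^sup>2) * - (2 * v)) (at v)"
    using DERIV_chain2[OF abs_powr_deriv[OF th] d] .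
  then have "((\<lambda>v. (1 / (2 * th)) * \<bar>1 - v\<^sup>2\<bar> powr th) has_real_derivative
      (1 / (2 * th)) * (th * plap th (1 - v\<^sup>2) * - (2 * v))) (at v)"
    by (rule DERIV_cmult)
  moreover have "(1 / (2 * th)) * (th * plap th (1 - v\<^sup>2) * - (2 * v)) = - (v * plap th (1 - v\<^sup>2))"
    using th by (simp add: field_simps)
  ultimately show ?thesis unfolding Fpot_def[abs_def] by simp
qed

lemma deriv_Fpot: "th > 1 \<Longrightarrow> deriv (Fpot th) v = - (v * plap th (1 - v\<^sup>2))"
  using Fpot_deriv DERIV_imp_deriv by blast

lemma plap_cont_on: "q > 1 \<Longrightarrow> continuous_on UNIV (plap q)"
  using plap_cont by (simp add: continuous_on_eq_continuous_at)

lemma deriv_Fpot_cont: "th > 1 \<Longrightarrow> continuous_on UNIV (deriv (Fpot th))"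
proof -
  assume th: "th > 1"
  have c: "continuous_on UNIV (\<lambda>v. plap th (1 - v\<^sup>2))"
    by (rule continuous_on_compose2[OF plap_cont_on[OF th]]) (auto intro!: continuous_intros)
  have "continuous_on UNIV (\<lambda>v. - (v * plap th (1 - v\<^sup>2)))"
    by (intro continuous_intros c)
  then show ?thesis using deriv_Fpot[OF th] by simp
qed

lemma Fpot_cont: "th > 1 \<Longrightarrow> continuous_on UNIV (Fpot th)"
  using Fpot_deriv DERIV_isCont by (metis continuous_on_eq_continuous_at open_UNIV)

lemma slice1:
  assumes "continuous_on (A \<times> B) (\<lambda>(x, t). f x t)" "t \<in> B"
  shows "continuous_on A (\<lambda>x. f x t)"
  using continuous_on_compose2[OF assms(1) continuous_on_Pair[OF continuous_on_id continuous_on_const, of A t]] assms(2)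
  by auto

lemma swapc:
  assumes "continuous_on (A \<times> B) (\<lambda>(x, t). f x t)"
  shows "continuous_on (B \<times> A) (\<lambda>(t, x). f x t)"
proof -
  have "prod.swap ` (B \<times> A) \<subseteq> A \<times> B" by auto
  then show ?thesis
    using continuous_on_compose2[OF assms(1) continuous_on_swap[of "B \<times> A"]]
    by (auto simp: case_prod_beta)
qed


lemma abs_powr_cont: "q > 1 \<Longrightarrow> continuous_on UNIV (\<lambda>w::real. \<bar>w\<bar> powr q)"
  using abs_powr_deriv DERIV_isCont by (simp add: continuous_on_eq_continuous_at) blast

theorem lemma3p1:
  fixes a b \<epsilon> p \<theta> T :: real
    and D :: "real \<Rightarrow> real"
    and u ux ut uxt wx mux J :: "real \<Rightarrow> real \<Rightarrow> real"
  assumes ab: "a < b" and eps: "\<epsilon> > 0" and p: "p > 1" and th: "\<theta> > 1" and T: "T > 0"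
    and D_C1: "D C1_differentiable_on UNIV" and D_pos: "\<And>v. D v > 0"
    \<comment> \<open>classical regularity of the solution on [a,b] x [0,T]\<close>
    and u_x: "\<And>x t. x \<in> {a..b} \<Longrightarrow> t \<in> {0..T} \<Longrightarrow>
                ((\<lambda>y. u y t) has_real_derivative ux x t) (at x within {a..b})"
    and w_x: "\<And>x t. x \<in> {a..b} \<Longrightarrow> t \<in> {0..T} \<Longrightarrow>
                ((\<lambda>y. plap p (ux y t)) has_real_derivative wx x t) (at x within {a..b})"
    and mu_x: "\<And>x t. x \<in> {a..b} \<Longrightarrow> t \<in> {0..T} \<Longrightarrow>
                ((\<lambda>y. - (\<epsilon> powr p) * wx y t + deriv (Fpot \<theta>) (u y t))
                   has_real_derivative mux x t) (at x within {a..b})"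
    and J_x: "\<And>x t. x \<in> {a..b} \<Longrightarrow> t \<in> {0..T} \<Longrightarrow>
                ((\<lambda>y. D (u y t) * mux y t) has_real_derivative J x t) (at x within {a..b})"
    and u_t: "\<And>x t. x \<in> {a..b} \<Longrightarrow> t \<in> {0..T} \<Longrightarrow>
                ((\<lambda>s. u x s) has_real_derivative ut x t) (at t within {0..T})"
    and ux_t: "\<And>x t. x \<in> {a..b} \<Longrightarrow> t \<in> {0..T} \<Longrightarrow>
                ((\<lambda>s. ux x s) has_real_derivative uxt x t) (at t within {0..T})"
    and ut_x: "\<And>x t. x \<in> {a..b} \<Longrightarrow> t \<in> {0..T} \<Longrightarrow>
                ((\<lambda>y. ut y t) has_real_derivative uxt x t) (at x within {a..b})"
    and cont: "continuous_on ({a..b} \<times> {0..T}) (\<lambda>(x, t). u x t)"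
              "continuous_on ({a..b} \<times> {0..T}) (\<lambda>(x, t). ux x t)"
              "continuous_on ({a..b} \<times> {0..T}) (\<lambda>(x, t). ut x t)"
              "continuous_on ({a..b} \<times> {0..T}) (\<lambda>(x, t). uxt x t)"
              "continuous_on ({a..b} \<times> {0..T}) (\<lambda>(x, t). wx x t)"
              "continuous_on ({a..b} \<times> {0..T}) (\<lambda>(x, t). mux x t)"
    \<comment> \<open>the equation u_t = [D(u) mu_x]_x\<close>
    and eqn: "\<And>x t. x \<in> {a..b} \<Longrightarrow> t \<in> {0..T} \<Longrightarrow> ut x t = J x t"
    \<comment> \<open>boundary conditions u_x = 0 and mu_x = 0 at x = a, b\<close>
    and bc: "\<And>t. t \<in> {0..T} \<Longrightarrow> ux a t = 0 \<and> ux b t = 0 \<and> mux a t = 0 \<and> mux b t = 0"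
  shows "(\<forall>t \<in> {0..T}.
            ((\<lambda>s. energy \<epsilon> p \<theta> a b (\<lambda>x. u x s)) has_real_derivative
               - (1 / \<epsilon>) * integral {a..b}
                   (\<lambda>x. (antideriv a (\<lambda>y. ut y t) x)\<^sup>2 / D (u x t))) (at t within {0..T}))
       \<and> (\<exists>d > 0. \<forall>t \<in> {0..T}.
            energy \<epsilon> p \<theta> a b (\<lambda>x. u x 0) - energy \<epsilon> p \<theta> a b (\<lambda>x. u x t)
              \<ge> d / \<epsilon> * integral {0..t}
                   (\<lambda>s. integral {a..b} (\<lambda>x. (antideriv a (\<lambda>y. ut y s) x)\<^sup>2)))"
proof -
  have Dc: "continuous_on UNIV D" using D_C1 by (rule C1_differentiable_imp_continuous_on)
  note pc = plap_cont_on[OF p] and Fc = deriv_Fpot_cont[OF th] and Fpc = Fpot_cont[OF th]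
  define mu where "mu x s = - (\<epsilon> powr p) * wx x s + deriv (Fpot \<theta>) (u x s)" for x s
  have e1: "\<epsilon> powr (p - 1) = \<epsilon> powr p / \<epsilon>" using eps by (simp add: powr_diff)
  have cx: "continuous_on {a..b} (\<lambda>x. u x t)" "continuous_on {a..b} (\<lambda>x. ux x t)"
    "continuous_on {a..b} (\<lambda>x. ut x t)" "continuous_on {a..b} (\<lambda>x. uxt x t)"
    "continuous_on {a..b} (\<lambda>x. wx x t)" "continuous_on {a..b} (\<lambda>x. mux x t)"
    if t: "t \<in> {0..T}" for t
    by (rule slice1[OF cont(1) t], rule slice1[OF cont(2) t], rule slice1[OF cont(3) t],
        rule slice1[OF cont(4) t], rule slice1[OF cont(5) t], rule slice1[OF cont(6) t])
  have cx2: "continuous_on {a..b} (\<lambda>x. D (u x t))"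
    "continuous_on {a..b} (\<lambda>x. plap p (ux x t))"
    "continuous_on {a..b} (\<lambda>x. deriv (Fpot \<theta>) (u x t))"
    "continuous_on {a..b} (\<lambda>x. Fpot \<theta> (u x t))"
    if t: "t \<in> {0..T}" for t
    by (rule continuous_on_compose2[OF Dc cx(1)[OF t]], simp,
        rule continuous_on_compose2[OF pc cx(2)[OF t]], simp,
        rule continuous_on_compose2[OF Fc cx(1)[OF t]], simp,
        rule continuous_on_compose2[OF Fpc cx(1)[OF t]], simp)
  have antid: "antideriv a (\<lambda>y. ut y t) x = D (u x t) * mux x t"
    if t: "t \<in> {0..T}" and x: "x \<in> {a..b}" for t x
  proof -
    have "((\<lambda>y. J y t) has_integral (D (u x t) * mux x t - D (u a t) * mux a t)) {a..x}"
    proof (rule fundamental_theorem_of_calculus)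
      show "a \<le> x" using x by auto
      fix y assume y: "y \<in> {a..x}"
      then have "y \<in> {a..b}" using x by auto
      from J_x[OF this t] have "((\<lambda>y. D (u y t) * mux y t) has_real_derivative J y t) (at y within {a..x})"
        by (rule DERIV_subset) (use x in auto)
      then show "((\<lambda>y. D (u y t) * mux y t) has_vector_derivative J y t) (at y within {a..x})"
        by (simp add: has_real_derivative_iff_has_vector_derivative)
    qed
    then have "((\<lambda>y. J y t) has_integral (D (u x t) * mux x t)) {a..x}"
      using bc[OF t] by simp
    moreover have "\<And>y. y \<in> {a..x} \<Longrightarrow> J y t = ut y t"
      using eqn[OF _ t] x by force
    ultimately have "((\<lambda>y. ut y t) has_integral (D (u x t) * mux x t)) {a..x}"
      using has_integral_cong[of "{a..x}" "\<lambda>y. J y t" "\<lambda>y. ut y t"] by simp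
    then show ?thesis unfolding antideriv_def by (rule integral_unique)
  qed
  have P1: "((\<lambda>x. wx x t * ut x t + plap p (ux x t) * uxt x t) has_integral 0) {a..b}"
    if t: "t \<in> {0..T}" for t
  proof -
    have "((\<lambda>x. wx x t * ut x t + uxt x t * plap p (ux x t)) has_integral
        (plap p (ux b t) * ut b t - plap p (ux a t) * ut a t)) {a..b}"
    proof (rule fundamental_theorem_of_calculus)
      show "a \<le> b" using ab by simp
      fix y assume y: "y \<in> {a..b}"
      show "((\<lambda>x. plap p (ux x t) * ut x t) has_vector_derivative
          wx y t * ut y t + uxt y t * plap p (ux y t)) (at y within {a..b})"
        unfolding has_real_derivative_iff_has_vector_derivative[symmetric]
        by (rule DERIV_mult[OF w_x[OF y t] ut_x[OF y t]])
    qed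
    then have "((\<lambda>x. wx x t * ut x t + uxt x t * plap p (ux x t)) has_integral 0) {a..b}"
      using bc[OF t] by (simp add: plap_def)
    then show ?thesis by (simp add: mult.commute)
  qed
  have P2: "((\<lambda>x. mux x t * (D (u x t) * mux x t) + mu x t * ut x t) has_integral 0) {a..b}"
    if t: "t \<in> {0..T}" for t
  proof -
    have "((\<lambda>x. mux x t * (D (u x t) * mux x t) + J x t * mu x t) has_integral
        (mu b t * (D (u b t) * mux b t) - mu a t * (D (u a t) * mux a t))) {a..b}"
    proof (rule fundamental_theorem_of_calculus)
      show "a \<le> b" using ab by simp
      fix y assume y: "y \<in> {a..b}"
      show "((\<lambda>x. mu x t * (D (u x t) * mux x t)) has_vector_derivative
          mux y t * (D (u y t) * mux y t) + J y t * mu y t) (at y within {a..b})"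
        unfolding has_real_derivative_iff_has_vector_derivative[symmetric] mu_def
        by (rule DERIV_mult[OF mu_x[OF y t] J_x[OF y t]])
    qed
    then have "((\<lambda>x. mux x t * (D (u x t) * mux x t) + J x t * mu x t) has_integral 0) {a..b}"
      using bc[OF t] by simp
    moreover have "\<And>x. x \<in> {a..b} \<Longrightarrow> mux x t * (D (u x t) * mux x t) + J x t * mu x t
        = mux x t * (D (u x t) * mux x t) + mu x t * ut x t"
      using eqn[OF _ t] by (simp add: mult.commute)
    ultimately show ?thesis
      using has_integral_cong[of "{a..b}" "\<lambda>x. mux x t * (D (u x t) * mux x t) + J x t * mu x t"
          "\<lambda>x. mux x t * (D (u x t) * mux x t) + mu x t * ut x t"] by simp
  qed
  define G where "G s x = \<epsilon> powr (p - 1) * \<bar>ux x s\<bar> powr p / p + Fpot \<theta> (u x s) / \<epsilon>" for s x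
  define Gs where "Gs s x = \<epsilon> powr (p - 1) * plap p (ux x s) * uxt x s
      + deriv (Fpot \<theta>) (u x s) * ut x s / \<epsilon>" for s x
  have Ge: "energy \<epsilon> p \<theta> a b (\<lambda>x. u x s) = integral {a..b} (G s)" if s: "s \<in> {0..T}" for s
    unfolding energy_def
  proof (rule integral_cong)
    fix x assume x: "x \<in> {a..b}"
    have "((\<lambda>x. u x s) has_vector_derivative ux x s) (at x within cbox a b)"
      using u_x[OF x s] by (simp add: has_real_derivative_iff_has_vector_derivative)
    then have "vector_derivative (\<lambda>x. u x s) (at x within cbox a b) = ux x s"
      by (intro vector_derivative_within_cbox[OF ab]) (use x in simp_all)
    then show "\<epsilon> powr (p - 1) * \<bar>vector_derivative (\<lambda>x. u x s) (at x within {a..b})\<bar> powr p / p +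
         Fpot \<theta> (u x s) / \<epsilon> = G s x" by (simp add: G_def)
  qed
  have cGs: "continuous_on ({0..T} \<times> cbox a b) (\<lambda>(s, x). Gs s x)"
  proof -
    let ?S = "{0..T} \<times> {a..b}"
    have c1: "continuous_on ?S (\<lambda>z. u (snd z) (fst z))"
      using swapc[OF cont(1)] by (simp add: case_prod_beta')
    have c2: "continuous_on ?S (\<lambda>z. ux (snd z) (fst z))"
      using swapc[OF cont(2)] by (simp add: case_prod_beta')
    have c3: "continuous_on ?S (\<lambda>z. ut (snd z) (fst z))"
      using swapc[OF cont(3)] by (simp add: case_prod_beta')
    have c4: "continuous_on ?S (\<lambda>z. uxt (snd z) (fst z))"
      using swapc[OF cont(4)] by (simp add: case_prod_beta')
    have c5: "continuous_on ?S (\<lambda>z. plap p (ux (snd z) (fst z)))"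
      using continuous_on_compose2[OF pc c2] by simp
    have c6: "continuous_on ?S (\<lambda>z. deriv (Fpot \<theta>) (u (snd z) (fst z)))"
      using continuous_on_compose2[OF Fc c1] by simp
    have "continuous_on ?S (\<lambda>z. \<epsilon> powr (p - 1) * plap p (ux (snd z) (fst z)) * uxt (snd z) (fst z)
      + deriv (Fpot \<theta>) (u (snd z) (fst z)) * ut (snd z) (fst z) / \<epsilon>)"
      using eps by (intro continuous_intros c3 c4 c5 c6) auto
    then show ?thesis by (simp add: Gs_def case_prod_beta')
  qed
  have Gint: "G s integrable_on cbox a b" if s: "s \<in> {0..T}" for s
  proof -
    have "continuous_on {a..b} (\<lambda>x. \<epsilon> powr (p - 1) * \<bar>ux x s\<bar> powr p / p + Fpot \<theta> (u x s) / \<epsilon>)"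
      using cx2(4)[OF s] p eps continuous_on_compose2[OF abs_powr_cont[OF p] cx(2)[OF s]]
      by (intro continuous_on_add continuous_on_divide continuous_on_mult continuous_on_const) auto
    then show ?thesis unfolding G_def box_real by (rule integrable_continuous_interval)
  qed
  have Gd: "((\<lambda>s. G s x) has_field_derivative Gs s x) (at s within {0..T})"
    if s: "s \<in> {0..T}" and x: "x \<in> cbox a b" for s x
  proof -
    have x': "x \<in> {a..b}" using x by simp
    have h1: "((\<lambda>s. \<bar>ux x s\<bar> powr p) has_real_derivative p * plap p (ux x s) * uxt x s) (at s within {0..T})"
      using DERIV_chain2[OF abs_powr_deriv[OF p] ux_t[OF x' s]] by simp
    have h2: "((\<lambda>s. Fpot \<theta> (u x s)) has_real_derivative deriv (Fpot \<theta>) (u x s) * ut x s) (at s within {0..T})"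
      using DERIV_chain2[OF Fpot_deriv[OF th] u_t[OF x' s]] deriv_Fpot[OF th] by simp
    have "((\<lambda>s. G s x) has_real_derivative
        \<epsilon> powr (p - 1) * (p * plap p (ux x s) * uxt x s) / p + deriv (Fpot \<theta>) (u x s) * ut x s / \<epsilon>)
        (at s within {0..T})"
      unfolding G_def by (intro DERIV_add DERIV_cdivide DERIV_cmult h1 h2)
    moreover have "\<epsilon> powr (p - 1) * (p * plap p (ux x s) * uxt x s) / p + deriv (Fpot \<theta>) (u x s) * ut x s / \<epsilon>
        = Gs s x" using p by (simp add: Gs_def)
    ultimately show ?thesis by simp
  qed
  have Gval: "integral {a..b} (Gs t) = - (1 / \<epsilon>) * integral {a..b}
                   (\<lambda>x. (antideriv a (\<lambda>y. ut y t) x)\<^sup>2 / D (u x t))"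
    if t: "t \<in> {0..T}" for t
  proof -
    have i3: "(\<lambda>x. D (u x t) * (mux x t)\<^sup>2) integrable_on {a..b}"
      using cx[OF t] cx2[OF t]
      by (intro integrable_continuous_interval continuous_intros) auto
    have "((\<lambda>x. (1 / \<epsilon>) * (\<epsilon> powr p * (wx x t * ut x t + plap p (ux x t) * uxt x t))
        + (1 / \<epsilon>) * (mux x t * (D (u x t) * mux x t) + mu x t * ut x t)
        - (1 / \<epsilon>) * (D (u x t) * (mux x t)\<^sup>2)) has_integral
        ((1 / \<epsilon>) * (\<epsilon> powr p * 0) + (1 / \<epsilon>) * 0 - (1 / \<epsilon>) * integral {a..b} (\<lambda>x. D (u x t) * (mux x t)\<^sup>2))) {a..b}"
      by (intro has_integral_diff has_integral_add has_integral_mult_right P1[OF t] P2[OF t]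
          integrable_integral i3)
    moreover have "\<And>x. (1 / \<epsilon>) * (\<epsilon> powr p * (wx x t * ut x t + plap p (ux x t) * uxt x t))
        + (1 / \<epsilon>) * (mux x t * (D (u x t) * mux x t) + mu x t * ut x t)
        - (1 / \<epsilon>) * (D (u x t) * (mux x t)\<^sup>2) = Gs t x"
      using eps unfolding Gs_def mu_def e1 by (simp add: field_simps power2_eq_square)
    ultimately have "(Gs t has_integral - (1 / \<epsilon>) * integral {a..b} (\<lambda>x. D (u x t) * (mux x t)\<^sup>2)) {a..b}"
      by simp
    then have "integral {a..b} (Gs t) = - (1 / \<epsilon>) * integral {a..b} (\<lambda>x. D (u x t) * (mux x t)\<^sup>2)"
      by (rule integral_unique)
    also have "integral {a..b} (\<lambda>x. D (u x t) * (mux x t)\<^sup>2) = integral {a..b}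
                   (\<lambda>x. (antideriv a (\<lambda>y. ut y t) x)\<^sup>2 / D (u x t))"
    proof (rule integral_cong)
      fix x assume x: "x \<in> {a..b}"
      have "D (u x t) > 0" by (rule D_pos)
      then show "D (u x t) * (mux x t)\<^sup>2 = (antideriv a (\<lambda>y. ut y t) x)\<^sup>2 / D (u x t)"
        using antid[OF t x] by (simp add: field_simps power2_eq_square)
    qed
    finally show ?thesis .
  qed
  define E where "E s = energy \<epsilon> p \<theta> a b (\<lambda>x. u x s)" for s
  define h where "h s = integral {a..b} (\<lambda>x. (antideriv a (\<lambda>y. ut y s) x)\<^sup>2 / D (u x s))" for s
  have part1: "(E has_real_derivative - (1 / \<epsilon>) * h t) (at t within {0..T})"
    if t: "t \<in> {0..T}" for t
  proof -
    have "((\<lambda>s. integral (cbox a b) (G s)) has_field_derivative integral (cbox a b) (Gs t)) (at t within {0..T})"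
      by (rule leibniz_rule_field_derivative[where fx = Gs, OF Gd Gint cGs t]) auto
    then have "((\<lambda>s. integral {a..b} (G s)) has_field_derivative - (1 / \<epsilon>) * h t) (at t within {0..T})"
      using Gval[OF t] by (simp add: h_def)
    then show ?thesis
      by (rule has_field_derivative_transform_within[where d=1]) (use t Ge in \<open>auto simp: E_def\<close>)
  qed
  have "\<exists>M>0. \<forall>x\<in>{a..b}. \<forall>s\<in>{0..T}. D (u x s) \<le> M"
  proof -
    let ?f = "\<lambda>z. D (case z of (x, t) \<Rightarrow> u x t)"
    have "continuous_on ({a..b} \<times> {0..T}) ?f"
      by (rule continuous_on_compose2[OF Dc cont(1)]) simp
    then have "compact (?f ` ({a..b} \<times> {0..T}))"
      by (intro compact_continuous_image compact_Times compact_Icc)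
    then have "bounded (?f ` ({a..b} \<times> {0..T}))" by (rule compact_imp_bounded)
    then obtain M where M: "M > 0" "\<forall>y\<in>?f ` ({a..b} \<times> {0..T}). norm y \<le> M"
      unfolding bounded_pos by blast
    have "D (u x s) \<le> M" if "x \<in> {a..b}" "s \<in> {0..T}" for x s
    proof -
      have "norm (?f (x, s)) \<le> M" using M(2) that by blast
      then show ?thesis by simp
    qed
    then show ?thesis using M(1) by blast
  qed
  then obtain M where M0: "M > 0" and MD: "\<And>x s. x \<in> {a..b} \<Longrightarrow> s \<in> {0..T} \<Longrightarrow> D (u x s) \<le> M"
    by blast
  define g where "g s = integral {a..b} (\<lambda>x. (antideriv a (\<lambda>y. ut y s) x)\<^sup>2)" for s
  have hg: "0 \<le> h s \<and> g s \<le> M * h s" if s: "s \<in> {0..T}" for s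
  proof -
    have Dne: "\<And>x. D (u x s) \<noteq> 0" using D_pos by (metis less_irrefl)
    have ia: "(\<lambda>x. (antideriv a (\<lambda>y. ut y s) x)\<^sup>2) integrable_on {a..b}"
    proof (rule integrable_eq)
      show "(\<lambda>x. (D (u x s) * mux x s)\<^sup>2) integrable_on {a..b}"
        using cx[OF s] cx2[OF s] by (intro integrable_continuous_interval continuous_intros) auto
      show "\<And>x. x \<in> {a..b} \<Longrightarrow> (D (u x s) * mux x s)\<^sup>2 = (antideriv a (\<lambda>y. ut y s) x)\<^sup>2"
        using antid[OF s] by simp
    qed
    have ib: "(\<lambda>x. (antideriv a (\<lambda>y. ut y s) x)\<^sup>2 / D (u x s)) integrable_on {a..b}"
    proof (rule integrable_eq)
      show "(\<lambda>x. (D (u x s) * mux x s)\<^sup>2 / D (u x s)) integrable_on {a..b}"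
        using cx[OF s] cx2[OF s] Dne by (intro integrable_continuous_interval continuous_intros) auto
      show "\<And>x. x \<in> {a..b} \<Longrightarrow> (D (u x s) * mux x s)\<^sup>2 / D (u x s) = (antideriv a (\<lambda>y. ut y s) x)\<^sup>2 / D (u x s)"
        using antid[OF s] by simp
    qed
    have "0 \<le> h s" unfolding h_def
      by (rule integral_nonneg[OF ib]) (use D_pos in \<open>auto intro: divide_nonneg_pos\<close>)
    moreover have "g s \<le> integral {a..b} (\<lambda>x. M * ((antideriv a (\<lambda>y. ut y s) x)\<^sup>2 / D (u x s)))"
      unfolding g_def
    proof (rule integral_le[OF ia integrable_on_mult_right[OF ib]])
      fix x assume x: "x \<in> {a..b}"
      let ?A = "(antideriv a (\<lambda>y. ut y s) x)\<^sup>2"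
      have dp: "D (u x s) > 0" by (rule D_pos)
      have "?A = D (u x s) * (?A / D (u x s))" using dp by simp
      also have "\<dots> \<le> M * (?A / D (u x s))"
        by (rule mult_right_mono[OF MD[OF x s]]) (use dp in simp)
      finally show "?A \<le> M * (?A / D (u x s))" .
    qed
    moreover have "integral {a..b} (\<lambda>x. M * ((antideriv a (\<lambda>y. ut y s) x)\<^sup>2 / D (u x s))) = M * h s"
      unfolding h_def by (rule integral_mult[OF ib, symmetric])
    ultimately show ?thesis by simp
  qed
  show ?thesis
  proof
    show "\<forall>t\<in>{0..T}. ((\<lambda>s. energy \<epsilon> p \<theta> a b (\<lambda>x. u x s)) has_real_derivative
               - (1 / \<epsilon>) * integral {a..b}
                   (\<lambda>x. (antideriv a (\<lambda>y. ut y t) x)\<^sup>2 / D (u x t))) (at t within {0..T})"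
      using part1 unfolding E_def h_def by blast
    show "\<exists>d > 0. \<forall>t \<in> {0..T}.
            energy \<epsilon> p \<theta> a b (\<lambda>x. u x 0) - energy \<epsilon> p \<theta> a b (\<lambda>x. u x t)
              \<ge> d / \<epsilon> * integral {0..t}
                   (\<lambda>s. integral {a..b} (\<lambda>x. (antideriv a (\<lambda>y. ut y s) x)\<^sup>2))"
    proof (intro exI[of _ "1 / M"] conjI ballI)
      show "0 < 1 / M" using M0 by simp
      fix t assume t: "t \<in> {0..T}"
      have sub: "{0..t} \<subseteq> {0..T}" using t by auto
      have "((\<lambda>s. - (1 / \<epsilon>) * h s) has_integral (E t - E 0)) {0..t}"
      proof (rule fundamental_theorem_of_calculus)
        show "0 \<le> t" using t by simp
        fix s assume s: "s \<in> {0..t}"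
        then have s': "s \<in> {0..T}" using sub by blast
        have "(E has_real_derivative - (1 / \<epsilon>) * h s) (at s within {0..t})"
          by (rule DERIV_subset[OF part1[OF s'] sub])
        then show "(E has_vector_derivative - (1 / \<epsilon>) * h s) (at s within {0..t})"
          by (simp add: has_real_derivative_iff_has_vector_derivative)
      qed
      then have "((\<lambda>s. (- \<epsilon>) * (- (1 / \<epsilon>) * h s)) has_integral (- \<epsilon>) * (E t - E 0)) {0..t}"
        by (rule has_integral_mult_right)
      moreover have eq: "(\<lambda>s. (- \<epsilon>) * (- (1 / \<epsilon>) * h s)) = h" using eps by (simp add: fun_eq_iff)
      ultimately have hi: "(h has_integral (- \<epsilon>) * (E t - E 0)) {0..t}" by simp
      have hint: "h integrable_on {0..t}" using hi by blast
      have Ih: "integral {0..t} h = (- \<epsilon>) * (E t - E 0)" using hi by (rule integral_unique)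
      have hnn: "0 \<le> integral {0..t} h"
        by (rule integral_nonneg[OF hint]) (use hg sub in blast)
      have key: "integral {0..t} g \<le> M * integral {0..t} h"
      proof (cases "g integrable_on {0..t}")
        case True
        have "integral {0..t} g \<le> integral {0..t} (\<lambda>s. M * h s)"
          by (rule integral_le[OF True integrable_on_mult_right[OF hint]]) (use hg sub in blast)
        then show ?thesis by simp
      next
        case False
        then show ?thesis using hnn M0 by (simp add: not_integrable_integral)
      qed
      have EE: "E 0 - E t = integral {0..t} h / \<epsilon>" using Ih eps by (simp add: field_simps)
      have "1 / M / \<epsilon> * integral {0..t} g \<le> 1 / M / \<epsilon> * (M * integral {0..t} h)"
        by (rule mult_left_mono[OF key]) (use M0 eps in simp)
      also have "\<dots> = integral {0..t} h / \<epsilon>" using M0 by (simp add: field_simps)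
      finally show "energy \<epsilon> p \<theta> a b (\<lambda>x. u x 0) - energy \<epsilon> p \<theta> a b (\<lambda>x. u x t)
              \<ge> 1 / M / \<epsilon> * integral {0..t}
                   (\<lambda>s. integral {a..b} (\<lambda>x. (antideriv a (\<lambda>y. ut y s) x)\<^sup>2))"
        using EE unfolding E_def g_def by simp
    qed
  qed
qed

end
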